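(* Let $N\ge3$, let $f_1,\dots,f_{N-1}$ be independent variables and $\beta_1,\dots,\beta_{N-2}$ constants. For $m=1,\dots,N-2$ define $$F_m(\lambda)=\prod_{n=m}^{N-2}\Bigl(1+(\lambda+\beta_n)\frac{\partial^2}{\partial f_n\partial f_{n+1}}\Bigr)(f_m f_{m+1}\cdots f_{N-1}),$$ and $F_{N-1}(\lambda)=f_{N-1}$. Then for $m=1,\dots,N-3$, $$F_m(\lambda)=f_mF_{m+1}(\lambda)+(\lambda+\beta_m)F_{m+2}(\lambda),$$ and for $m=1,\dots,N-2$, $\dfrac{\partial F_m(\lambda)}{\partial f_m}=F_{m+1}(\lambda)$. *)

theory Defs
  imports Complex_Main "HOL-Library.Poly_Mapping"
begin

text \<open>Polynomials with real coefficients in the independent variables f_i (i :: nat),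
  represented as finitely supported maps from monomials (exponent vectors) to coefficients.\<close>

type_synonym rpoly = "(nat \<Rightarrow>\<^sub>0 nat) \<Rightarrow>\<^sub>0 real"

definition pvar :: "nat \<Rightarrow> rpoly" where
  "pvar i = Poly_Mapping.single (Poly_Mapping.single i 1) 1"

definition pconst :: "real \<Rightarrow> rpoly" where
  "pconst c = Poly_Mapping.single 0 c"

definition pderiv_var :: "nat \<Rightarrow> rpoly \<Rightarrow> rpoly" where
  "pderiv_var i p =
     (\<Sum>(mon :: nat \<Rightarrow>\<^sub>0 nat)\<in>Poly_Mapping.keys p. if 0 < Poly_Mapping.lookup mon i
        then Poly_Mapping.single (mon - Poly_Mapping.single i 1)
               (of_nat (Poly_Mapping.lookup mon i) * Poly_Mapping.lookup p mon)
        else 0)"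

definition Dop :: "(nat \<Rightarrow> real) \<Rightarrow> real \<Rightarrow> nat \<Rightarrow> rpoly \<Rightarrow> rpoly" where
  "Dop \<beta> lam n p = p + pconst (lam + \<beta> n) * pderiv_var n (pderiv_var (n + 1) p)"

text \<open>F_m(lambda) = prod_{n=m}^{N-2} Dop_n (f_m ... f_{N-1}) for m \<le> N-2, F_{N-1} = f_{N-1}.
  The (commuting) operators are composed as Dop_m o ... o Dop_(N-2).\<close>
definition Fpoly :: "nat \<Rightarrow> (nat \<Rightarrow> real) \<Rightarrow> real \<Rightarrow> nat \<Rightarrow> rpoly" where
  "Fpoly N \<beta> lam m =
     (if m = N - 1 then pvar (N - 1)
      else foldr (Dop \<beta> lam) [m..<N - 1] (\<Prod>i\<in>{m..N - 1}. pvar i))"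

end

theory Submission imports Defs begin

lemma key_eq:
  fixes y q :: "nat \<Rightarrow>\<^sub>0 nat"
  shows "(y = Poly_Mapping.single j 1 + q) \<longleftrightarrow> (0 < Poly_Mapping.lookup y j \<and> q = y - Poly_Mapping.single j 1)"
proof
  assume h: "y = Poly_Mapping.single j 1 + q"
  show "0 < Poly_Mapping.lookup y j \<and> q = y - Poly_Mapping.single j 1"
  proof
    show "0 < Poly_Mapping.lookup y j" using h by (simp add: lookup_add)
    show "q = y - Poly_Mapping.single j 1"
      unfolding poly_mapping_eq_iff fun_eq_iff using h by (simp add: lookup_add lookup_minus)
  qed
next
  assume h: "0 < Poly_Mapping.lookup y j \<and> q = y - Poly_Mapping.single j 1"
  show "y = Poly_Mapping.single j 1 + q"
    unfolding poly_mapping_eq_iff fun_eq_iff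
  proof
    fix k show "Poly_Mapping.lookup y k = Poly_Mapping.lookup (Poly_Mapping.single j 1 + q) k"
      using h by (cases "k = j") (simp_all add: lookup_add lookup_minus lookup_single)
  qed
qed

lemma lookup_pvar_mult:
  "Poly_Mapping.lookup (pvar j * g) y = (if 0 < Poly_Mapping.lookup y j then Poly_Mapping.lookup g (y - Poly_Mapping.single j 1) else 0)"
proof -
  have "Poly_Mapping.lookup (pvar j * g) y = (\<Sum>q. Poly_Mapping.lookup g q when y = Poly_Mapping.single j 1 + q)"
    by (simp add: pvar_def lookup_mult lookup_single when_mult)
  also have "\<dots> = (\<Sum>q. Poly_Mapping.lookup g q when (0 < Poly_Mapping.lookup y j \<and> q = y - Poly_Mapping.single j 1))"
    by (simp only: key_eq)
  also have "\<dots> = (if 0 < Poly_Mapping.lookup y j then Poly_Mapping.lookup g (y - Poly_Mapping.single j 1) else 0)"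
    by (cases "0 < Poly_Mapping.lookup y j") auto
  finally show ?thesis .
qed

lemma lookup_pconst_mult:
  "Poly_Mapping.lookup (pconst c * g) y = c * Poly_Mapping.lookup g y"
proof -
  have "Poly_Mapping.lookup (pconst c * g) y = c * (\<Sum>q. Poly_Mapping.lookup g q when y = 0 + q)"
    unfolding pconst_def lookup_mult lookup_single when_mult by simp
  also have "\<dots> = c * Poly_Mapping.lookup g y" by simp
  finally show ?thesis .
qed

lemma lookup_pderiv:
  "Poly_Mapping.lookup (pderiv_var i p) x = of_nat (Poly_Mapping.lookup x i + 1) * Poly_Mapping.lookup p (x + Poly_Mapping.single i 1)"
proof -
  let ?e = "Poly_Mapping.single i (1::nat)"
  have "Poly_Mapping.lookup (pderiv_var i p) x = (\<Sum>mon\<in>Poly_Mapping.keys p. if mon = x + ?e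
        then of_nat (Poly_Mapping.lookup mon i) * Poly_Mapping.lookup p mon else 0)"
    unfolding pderiv_var_def lookup_sum
  proof (rule sum.cong[OF refl])
    fix mon
    show "Poly_Mapping.lookup (if 0 < Poly_Mapping.lookup mon i
            then Poly_Mapping.single (mon - ?e) (of_nat (Poly_Mapping.lookup mon i) * Poly_Mapping.lookup p mon)
            else 0) x = (if mon = x + ?e then of_nat (Poly_Mapping.lookup mon i) * Poly_Mapping.lookup p mon else 0)"
    proof (cases "0 < Poly_Mapping.lookup mon i")
      case True
      have "(mon - ?e = x) = (mon = x + ?e)"
        using key_eq[of mon i x] True by (auto simp: add.commute)
      then show ?thesis using True by (simp add: lookup_single when_def)
    next
      case False
      have "mon \<noteq> x + ?e" using False by (auto simp: lookup_add)
      then show ?thesis using False by simp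
    qed
  qed
  also have "\<dots> = of_nat (Poly_Mapping.lookup x i + 1) * Poly_Mapping.lookup p (x + ?e)"
  proof (cases "x + ?e \<in> Poly_Mapping.keys p")
    case True
    then show ?thesis
      by (simp add: sum.delta' lookup_add)
  next
    case False
    then have "Poly_Mapping.lookup p (x + ?e) = 0" by (simp add: in_keys_iff)
    then show ?thesis using False by (simp add: sum.delta')
  qed
  finally show ?thesis .
qed


definition free :: "nat \<Rightarrow> rpoly \<Rightarrow> bool" where
  "free i p = (\<forall>mon. 0 < Poly_Mapping.lookup mon i \<longrightarrow> Poly_Mapping.lookup p mon = 0)"

lemma free_deriv0: "free i p \<Longrightarrow> pderiv_var i p = 0"
  unfolding poly_mapping_eq_iff fun_eq_iff free_def
  by (simp add: lookup_pderiv lookup_add)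

lemma free_add: "free i p \<Longrightarrow> free i q \<Longrightarrow> free i (p + q)"
  unfolding free_def by (simp add: lookup_add)

lemma free_pconst_mult: "free i p \<Longrightarrow> free i (pconst c * p)"
  unfolding free_def by (simp add: lookup_pconst_mult)

lemma free_pvar_mult: "free i p \<Longrightarrow> j \<noteq> i \<Longrightarrow> free i (pvar j * p)"
  unfolding free_def by (simp add: lookup_pvar_mult lookup_minus lookup_single when_def)

lemma free_pderiv: "free i p \<Longrightarrow> free i (pderiv_var j p)"
  unfolding free_def by (simp add: lookup_pderiv lookup_add)

lemma free_one: "free i 1"
  unfolding free_def by (auto simp: lookup_one when_def)

lemma free_pvar: "j \<noteq> i \<Longrightarrow> free i (pvar j)"
  using free_pvar_mult[OF free_one, of j i] by simp

lemma free_Dop: "free i p \<Longrightarrow> free i (Dop \<beta> lam n p)"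
  unfolding Dop_def by (intro free_add free_pconst_mult free_pderiv)

lemma free_foldr: "free i p \<Longrightarrow> free i (foldr (Dop \<beta> lam) xs p)"
  by (induction xs) (simp_all add: free_Dop)

lemma free_prod: "i \<notin> S \<Longrightarrow> free i (\<Prod>j\<in>S. pvar j)"
proof (induction S rule: infinite_finite_induct)
  case (infinite A) then show ?case by (simp add: free_one)
next
  case empty then show ?case by (simp add: free_one)
next
  case (insert x F) then show ?case by (simp add: free_pvar_mult)
qed

lemma pderiv_add: "pderiv_var i (p + q) = pderiv_var i p + pderiv_var i q"
  unfolding poly_mapping_eq_iff fun_eq_iff
  by (simp add: lookup_pderiv lookup_add distrib_left)

lemma pderiv_zero: "pderiv_var i 0 = 0"
  unfolding poly_mapping_eq_iff fun_eq_iff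
  by (simp add: lookup_pderiv)

lemma pderiv_pconst_mult: "pderiv_var i (pconst c * p) = pconst c * pderiv_var i p"
  unfolding poly_mapping_eq_iff fun_eq_iff
  by (simp add: lookup_pderiv lookup_pconst_mult)

lemma pm_arith1:
  fixes x :: "nat \<Rightarrow>\<^sub>0 nat"
  shows "x + Poly_Mapping.single i 1 - Poly_Mapping.single i 1 = x"
  unfolding poly_mapping_eq_iff fun_eq_iff
  by (simp add: lookup_add lookup_minus)

lemma pm_arith2:
  fixes x :: "nat \<Rightarrow>\<^sub>0 nat"
  shows "0 < Poly_Mapping.lookup x i \<Longrightarrow> x - Poly_Mapping.single i 1 + Poly_Mapping.single i 1 = x"
  unfolding poly_mapping_eq_iff fun_eq_iff
  by (auto simp: lookup_add lookup_minus lookup_single when_def)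

lemma pm_arith3:
  fixes x :: "nat \<Rightarrow>\<^sub>0 nat"
  shows "i \<noteq> j \<Longrightarrow> x + Poly_Mapping.single i 1 - Poly_Mapping.single j 1 = x - Poly_Mapping.single j 1 + Poly_Mapping.single i 1"
  unfolding poly_mapping_eq_iff fun_eq_iff
  by (auto simp: lookup_add lookup_minus lookup_single when_def)

lemma pderiv_pvar_mult:
  "pderiv_var i (pvar j * g) = (if i = j then g else 0) + pvar j * pderiv_var i g"
  unfolding poly_mapping_eq_iff fun_eq_iff
proof
  fix x
  show "Poly_Mapping.lookup (pderiv_var i (pvar j * g)) x =
        Poly_Mapping.lookup ((if i = j then g else 0) + pvar j * pderiv_var i g) x"
  proof (cases "i = j")
    case True
    then show ?thesis
      by (cases "0 < Poly_Mapping.lookup x i")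
        (simp_all add: lookup_pderiv lookup_pvar_mult lookup_add lookup_minus pm_arith1 pm_arith2[of x j, simplified] distrib_right)
  next
    case False
    then show ?thesis
      by (simp add: lookup_pderiv lookup_pvar_mult lookup_add lookup_minus pm_arith3[OF False, of x, simplified] lookup_single when_def)
  qed
qed

lemma Dop_comm: "j \<noteq> n \<Longrightarrow> j \<noteq> n + 1 \<Longrightarrow> Dop \<beta> lam n (pvar j * g) = pvar j * Dop \<beta> lam n g"
proof -
  assume a: "j \<noteq> n" "j \<noteq> n + 1"
  have "pderiv_var n (pderiv_var (n+1) (pvar j * g)) = pvar j * pderiv_var n (pderiv_var (n+1) g)"
    using a by (simp add: pderiv_pvar_mult pderiv_add pderiv_zero)
  then show ?thesis unfolding Dop_def by (simp add: distrib_left mult.left_commute)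
qed

lemma foldr_comm: "(\<forall>n\<in>set xs. j \<noteq> n \<and> j \<noteq> n + 1) \<Longrightarrow>
    foldr (Dop \<beta> lam) xs (pvar j * g) = pvar j * foldr (Dop \<beta> lam) xs g"
  by (induction xs) (simp_all add: Dop_comm)


lemma step1:
  assumes "N \<ge> 3" "m \<le> N - 2"
  shows "Fpoly N \<beta> lam m = Dop \<beta> lam m (pvar m * Fpoly N \<beta> lam (m + 1))"
proof -
  have ne: "m \<noteq> N - 1" using assms by auto
  have l: "[m..<N - 1] = m # [m+1..<N - 1]" using assms by (simp add: upt_conv_Cons)
  have p: "(\<Prod>i\<in>{m..N - 1}. pvar i) = pvar m * (\<Prod>i\<in>{m+1..N - 1}. pvar i)"
    using assms by (subst prod.atLeast_Suc_atMost) auto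
  have c: "foldr (Dop \<beta> lam) [m+1..<N - 1] (pvar m * (\<Prod>i\<in>{m+1..N - 1}. pvar i))
       = pvar m * foldr (Dop \<beta> lam) [m+1..<N - 1] (\<Prod>i\<in>{m+1..N - 1}. pvar i)"
    by (rule foldr_comm) auto
  have r: "foldr (Dop \<beta> lam) [m+1..<N - 1] (\<Prod>i\<in>{m+1..N - 1}. pvar i) = Fpoly N \<beta> lam (m + 1)"
  proof (cases "m + 1 = N - 1")
    case True then show ?thesis by (simp add: Fpoly_def)
  next
    case False then show ?thesis by (simp add: Fpoly_def)
  qed
  have "Fpoly N \<beta> lam m = foldr (Dop \<beta> lam) [m..<N - 1] (\<Prod>i\<in>{m..N - 1}. pvar i)"
    using ne unfolding Fpoly_def by simp
  also have "\<dots> = Dop \<beta> lam m (foldr (Dop \<beta> lam) [m+1..<N - 1] (pvar m * (\<Prod>i\<in>{m+1..N - 1}. pvar i)))"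
    unfolding l p by simp
  also have "\<dots> = Dop \<beta> lam m (pvar m * Fpoly N \<beta> lam (m + 1))"
    unfolding c r ..
  finally show ?thesis .
qed

lemma free_F:
  assumes "N \<ge> 3" "m \<le> N - 2"
  shows "free m (Fpoly N \<beta> lam (m + 1))"
proof (cases "m + 1 = N - 1")
  case True then show ?thesis using assms by (simp add: Fpoly_def free_pvar)
next
  case False then show ?thesis unfolding Fpoly_def
    by (simp add: free_foldr free_prod)
qed

lemma eqA:
  assumes "N \<ge> 3" "m \<le> N - 2"
  shows "Fpoly N \<beta> lam m = pvar m * Fpoly N \<beta> lam (m + 1)
           + pconst (lam + \<beta> m) * pderiv_var (m + 1) (Fpoly N \<beta> lam (m + 1))"
    and "pderiv_var m (Fpoly N \<beta> lam m) = Fpoly N \<beta> lam (m + 1)"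
proof -
  let ?G = "Fpoly N \<beta> lam (m + 1)"
  have fr: "free m ?G" using free_F[OF assms] .
  have fr2: "free m (pderiv_var (m + 1) ?G)" using fr by (rule free_pderiv)
  have d1: "pderiv_var (m + 1) (pvar m * ?G) = pvar m * pderiv_var (m + 1) ?G"
    by (simp add: pderiv_pvar_mult)
  have d2: "pderiv_var m (pvar m * pderiv_var (m + 1) ?G) = pderiv_var (m + 1) ?G"
    by (simp add: pderiv_pvar_mult free_deriv0[OF fr2[simplified]])
  show A: "Fpoly N \<beta> lam m = pvar m * ?G + pconst (lam + \<beta> m) * pderiv_var (m + 1) ?G"
    unfolding step1[OF assms] Dop_def d1 d2 ..
  show "pderiv_var m (Fpoly N \<beta> lam m) = ?G"
    unfolding A pderiv_add pderiv_pconst_mult pderiv_pvar_mult free_deriv0[OF fr] free_deriv0[OF fr2]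
    by simp
qed

theorem mainTheorem5:
  fixes N :: nat and \<beta> :: "nat \<Rightarrow> real" and lam :: real
  assumes "N \<ge> 3"
  shows "(\<forall>m. 1 \<le> m \<and> m \<le> N - 3 \<longrightarrow>
            Fpoly N \<beta> lam m = pvar m * Fpoly N \<beta> lam (m + 1)
                            + pconst (lam + \<beta> m) * Fpoly N \<beta> lam (m + 2))
       \<and> (\<forall>m. 1 \<le> m \<and> m \<le> N - 2 \<longrightarrow>
            pderiv_var m (Fpoly N \<beta> lam m) = Fpoly N \<beta> lam (m + 1))"
proof (intro conjI allI impI)
  fix m assume m: "1 \<le> m \<and> m \<le> N - 3"
  have a: "m \<le> N - 2" "m + 1 \<le> N - 2" using m assms by auto
  show "Fpoly N \<beta> lam m = pvar m * Fpoly N \<beta> lam (m + 1)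
                            + pconst (lam + \<beta> m) * Fpoly N \<beta> lam (m + 2)"
    using eqA(1)[OF assms a(1)] eqA(2)[OF assms a(2)] by (simp add: add.assoc)
next
  fix m assume m: "1 \<le> m \<and> m \<le> N - 2"
  then show "pderiv_var m (Fpoly N \<beta> lam m) = Fpoly N \<beta> lam (m + 1)"
    using eqA(2)[OF assms] by blast
qed

end
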